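(* Let $V$ and $E$ be complex vector spaces of dimensions $n$ and $r$ with Hermitian metrics whose positive $(1,1)$-forms are $\omega$ and $h$, and equip $V\oplus E$ with the Hermitian metric $\alpha=p_V^*\omega+p_E^*h$. Let $R$ be a $(2,2)$-form on $V\oplus E$ that is the image, under the isomorphism $\bigwedge^{1,1}V^*\otimes\operatorname{End}E\cong\bigwedge^{1,1}V^*\otimes\bigwedge^{1,1}E^*\subset\bigwedge^{2,2}(V\oplus E)^*$ induced by $h$, of a Hermitian element of $\bigwedge^{1,1}V^*\otimes\operatorname{End}E$, and set $c_1=\Lambda_hR$. Then $$\lvert\Lambda_\omega R\rvert^2\le n\lvert R\rvert^2\quad\text{and}\quad\lvert c_1\rvert^2=\lvert\Lambda_hR\rvert^2\le r\lvert R\rvert^2,$$ with equality in the first inequality if and only if $R=u\wedge\omega$ for some $u$ that is the pullback of a $(1,1)$-form on $E$, and equality in the second if and only if $R=v\wedge h$ for some $v$ that is the pullback of a $(1,1)$-form on $V$.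
   Context: $p_V,p_E$ are the projections of $V\oplus E$ onto its factors, and $\omega$, $h$ are identified with their pullbacks to $V\oplus E$. All norms are those induced by $\alpha$ on $\bigwedge^*(V\oplus E)^*$. $\Lambda_\omega$ (resp. $\Lambda_h$) is the adjoint, with respect to this inner product, of the operator $w\mapsto\omega\wedge w$ (resp. $w\mapsto h\wedge w$). *)

theory Defs
  imports Complex_Main
begin

text \<open>
Coordinate model of the complexified exterior algebra of (V \<oplus> E)^*.
V = C^n, E = C^r, written in orthonormal coordinates z_1..z_n (for omega) and
w_1..w_r (for h).  The complexified cotangent space of V \<oplus> E has the basis
  dz_j  = index j               (j < n)
  dw_a  = index n + a           (a < r)
  dzb_j = index n + r + j       (j < n)    (conjugate dz-bar)
  dwb_a = index n + r + n + a   (a < r)    (conjugate dw-bar)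
so N = 2(n+r) indices.  A form is a function from finite index sets S
(the increasing wedge monomial over S) to its complex coefficient.
\<close>

type_synonym form = "nat set \<Rightarrow> complex"

definition dimC :: "nat \<Rightarrow> nat \<Rightarrow> nat" where
  "dimC n r = 2 * (n + r)"

definition mono :: "nat set \<Rightarrow> form" where
  "mono S = (\<lambda>T. if T = S then 1 else 0)"

definition fscale :: "complex \<Rightarrow> form \<Rightarrow> form" where
  "fscale c \<phi> = (\<lambda>S. c * \<phi> S)"

text \<open>Sign of the permutation sorting (sorted S) followed by (sorted T).\<close>
definition wsign :: "nat set \<Rightarrow> nat set \<Rightarrow> complex" where
  "wsign S T = (-1) ^ card {(s, t). s \<in> S \<and> t \<in> T \<and> t < s}"

definition wedge :: "form \<Rightarrow> form \<Rightarrow> form" where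
  "wedge \<phi> \<psi> = (\<lambda>U. \<Sum>S\<in>Pow U. wsign S (U - S) * \<phi> S * \<psi> (U - S))"

definition supp_in :: "nat \<Rightarrow> form \<Rightarrow> bool" where
  "supp_in N \<phi> = (\<forall>S. \<phi> S \<noteq> 0 \<longrightarrow> S \<subseteq> {..<N})"

text \<open>Hermitian inner product on forms induced by the Euclidean metric
(dx, dy orthonormal), so that |dz_j|^2 = |dzb_j|^2 = 2 and distinct
monomials are orthogonal.\<close>
definition finner :: "nat \<Rightarrow> form \<Rightarrow> form \<Rightarrow> complex" where
  "finner N \<phi> \<psi> = (\<Sum>S\<in>Pow {..<N}. of_nat (2 ^ card S) * \<phi> S * cnj (\<psi> S))"

definition fnorm :: "nat \<Rightarrow> form \<Rightarrow> real" where
  "fnorm N \<phi> = sqrt (Re (finner N \<phi> \<phi>))"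

definition Lam :: "nat \<Rightarrow> form \<Rightarrow> form \<Rightarrow> form" where
  "Lam N \<eta> \<phi> = (THE \<psi>. supp_in N \<psi> \<and>
      (\<forall>\<chi>. supp_in N \<chi> \<longrightarrow> finner N \<psi> \<chi> = finner N \<phi> (wedge \<eta> \<chi>)))"

text \<open>Positive (1,1)-forms of the Euclidean (Hermitian) metrics, pulled back
to V \<oplus> E:  omega = (i/2) sum dz_j \<and> dzb_j,  h = (i/2) sum dw_a \<and> dwb_a.\<close>
definition omegaV :: "nat \<Rightarrow> nat \<Rightarrow> form" where
  "omegaV n r = (\<lambda>U. \<Sum>j<n. (\<i>/2) * wedge (mono {j}) (mono {n+r+j}) U)"

definition hE :: "nat \<Rightarrow> nat \<Rightarrow> form" where
  "hE n r = (\<lambda>U. \<Sum>a<r. (\<i>/2) * wedge (mono {n+a}) (mono {n+r+n+a}) U)"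

text \<open>Hermitian element  sum A_{jkab} (i dz_j \<and> dzb_k) \<otimes> (endomorphism with
matrix entries A_{jk..}) of \<Lambda>^{1,1}V^* \<otimes> End E; Hermitian means
A k j b a = conj (A j k a b).\<close>
definition herm_coeffs :: "nat \<Rightarrow> nat \<Rightarrow> (nat \<Rightarrow> nat \<Rightarrow> nat \<Rightarrow> nat \<Rightarrow> complex) \<Rightarrow> bool" where
  "herm_coeffs n r A = (\<forall>j k a b. j < n \<longrightarrow> k < n \<longrightarrow> a < r \<longrightarrow> b < r \<longrightarrow>
       A k j b a = cnj (A j k a b))"

text \<open>Its image in \<Lambda>^{2,2}(V \<oplus> E)^* under the isomorphism induced by h
(the endomorphism with entries A_{..ab} goes to sum A_{..ab} i dw_a \<and> dwb_b).\<close>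
definition curv_form :: "nat \<Rightarrow> nat \<Rightarrow> (nat \<Rightarrow> nat \<Rightarrow> nat \<Rightarrow> nat \<Rightarrow> complex) \<Rightarrow> form" where
  "curv_form n r A = (\<lambda>U. \<Sum>j<n. \<Sum>k<n. \<Sum>a<r. \<Sum>b<r.
      A j k a b * wedge (fscale \<i> (wedge (mono {j}) (mono {n+r+k})))
                        (fscale \<i> (wedge (mono {n+a}) (mono {n+r+n+b}))) U)"

definition pullback_E11 :: "nat \<Rightarrow> nat \<Rightarrow> form \<Rightarrow> bool" where
  "pullback_E11 n r u = (\<forall>S. u S \<noteq> 0 \<longrightarrow> (\<exists>a<r. \<exists>b<r. S = {n+a, n+r+n+b}))"

definition pullback_V11 :: "nat \<Rightarrow> nat \<Rightarrow> form \<Rightarrow> bool" where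
  "pullback_V11 n r v = (\<forall>S. v S \<noteq> 0 \<longrightarrow> (\<exists>j<n. \<exists>k<n. S = {j, n+r+k}))"

end

theory Submission
  imports Defs
begin


lemma wedge_sum_right: "wedge \<phi> (\<lambda>U. \<Sum>t\<in>I. f t U) = (\<lambda>U. \<Sum>t\<in>I. wedge \<phi> (f t) U)"
  unfolding wedge_def by (auto simp: sum_distrib_left intro!: ext sum.swap)

lemma wedge_sum_left: "wedge (\<lambda>U. \<Sum>t\<in>I. f t U) \<psi> = (\<lambda>U. \<Sum>t\<in>I. wedge (f t) \<psi> U)"
  unfolding wedge_def by (intro ext) (simp add: sum_distrib_right sum_distrib_left; rule sum.swap)

lemma wedge_scale_right: "wedge \<phi> (\<lambda>U. c * \<psi> U) = (\<lambda>U. c * wedge \<phi> \<psi> U)"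
  unfolding wedge_def by (auto simp: sum_distrib_left intro!: ext sum.cong)

lemma wedge_scale_left: "wedge (\<lambda>U. c * \<phi> U) \<psi> = (\<lambda>U. c * wedge \<phi> \<psi> U)"
  unfolding wedge_def by (auto simp: sum_distrib_left intro!: ext sum.cong)

lemma wedge_mono_mono:
  assumes "finite S" "finite T"
  shows "wedge (mono S) (mono T) = (\<lambda>U. if S \<inter> T = {} then wsign S T * mono (S \<union> T) U else 0)"
proof (rule ext)
  fix U
  show "wedge (mono S) (mono T) U = (if S \<inter> T = {} then wsign S T * mono (S \<union> T) U else 0)"
  proof (cases "S \<subseteq> U \<and> U - S = T")
    case True
    then have "wedge (mono S) (mono T) U = (\<Sum>S'\<in>Pow U. if S' = S then wsign S T else 0)"
      unfolding wedge_def mono_def by (intro sum.cong) auto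
    also have "\<dots> = wsign S T"
    proof -
      have "U = S \<union> T" using True by auto
      then have "finite U" using assms by simp
      then show ?thesis using True by (subst sum.delta) auto
    qed
    finally show ?thesis using True assms unfolding mono_def by auto
  next
    case False
    then have "wedge (mono S) (mono T) U = (\<Sum>S'\<in>Pow U. 0)"
      unfolding wedge_def mono_def by (intro sum.cong) auto
    then show ?thesis using False unfolding mono_def by auto
  qed
qed



lemma finner_self: "finner N \<phi> \<phi> = of_real (\<Sum>S\<in>Pow {..<N}. 2 ^ card S * (cmod (\<phi> S))\<^sup>2)"
  unfolding finner_def of_real_sum
  by (intro sum.cong refl) (simp add: mult.assoc complex_norm_square[symmetric])

lemma fnorm_sq: "(fnorm N \<phi>)\<^sup>2 = (\<Sum>S\<in>Pow {..<N}. 2 ^ card S * (cmod (\<phi> S))\<^sup>2)"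
  unfolding fnorm_def finner_self by (simp add: sum_nonneg)

lemma finner_diff: "finner N (\<lambda>S. a S - b S) c = finner N a c - finner N b c"
  unfolding finner_def by (simp add: sum_subtractf[symmetric] algebra_simps)

definition lamf :: "nat \<Rightarrow> form \<Rightarrow> form \<Rightarrow> form" where
  "lamf N \<eta> \<phi> T = (if T \<subseteq> {..<N} then (\<Sum>U\<in>{U\<in>Pow {..<N}. T \<subseteq> U}.
      of_nat (2 ^ card U) / of_nat (2 ^ card T) * \<phi> U * cnj (wsign (U - T) T * \<eta> (U - T))) else 0)"

lemma sum_Pow_compl:
  assumes "finite U"
  shows "(\<Sum>S\<in>Pow U. g S (U - S)) = (\<Sum>T\<in>Pow U. g (U - T) T)"
  by (rule sum.reindex_bij_witness[of _ "\<lambda>X. U - X" "\<lambda>X. U - X"]) (auto simp: double_diff)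

lemma lamf_adj:
  assumes "supp_in N \<chi>"
  shows "finner N (lamf N \<eta> \<phi>) \<chi> = finner N \<phi> (wedge \<eta> \<chi>)"
proof -
  define F where "F U T = of_nat (2 ^ card U) * \<phi> U * cnj (wsign (U - T) T * \<eta> (U - T)) * cnj (\<chi> T)" for U T
  have "finner N \<phi> (wedge \<eta> \<chi>) = (\<Sum>U\<in>Pow {..<N}. \<Sum>T\<in>{T\<in>Pow {..<N}. T \<subseteq> U}. F U T)"
    unfolding finner_def
  proof (intro sum.cong refl)
    fix U assume U: "U \<in> Pow {..<N}"
    then have fU: "finite U" by (auto intro: finite_subset)
    have e: "{T\<in>Pow {..<N}. T \<subseteq> U} = Pow U" using U by auto
    have "wedge \<eta> \<chi> U = (\<Sum>T\<in>Pow U. wsign (U - T) T * \<eta> (U - T) * \<chi> T)"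
      unfolding wedge_def using sum_Pow_compl[OF fU, of "\<lambda>S T. wsign S T * \<eta> S * \<chi> T"] by simp
    then show "of_nat (2 ^ card U) * \<phi> U * cnj (wedge \<eta> \<chi> U) = (\<Sum>T\<in>{T\<in>Pow {..<N}. T \<subseteq> U}. F U T)"
      unfolding e F_def by (simp add: cnj_sum sum_distrib_left mult.assoc)
  qed
  also have "\<dots> = (\<Sum>T\<in>Pow {..<N}. \<Sum>U\<in>{U\<in>Pow {..<N}. T \<subseteq> U}. F U T)"
    by (rule sum.swap_restrict) auto
  also have "\<dots> = finner N (lamf N \<eta> \<phi>) \<chi>"
    unfolding finner_def
  proof (intro sum.cong refl)
    fix T assume T: "T \<in> Pow {..<N}"
    have "of_nat (2 ^ card T) \<noteq> (0::complex)" by simp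
    then show "(\<Sum>U\<in>{U\<in>Pow {..<N}. T \<subseteq> U}. F U T) = of_nat (2 ^ card T) * lamf N \<eta> \<phi> T * cnj (\<chi> T)"
      using T unfolding lamf_def F_def by (simp add: sum_distrib_left sum_distrib_right)
  qed
  finally show ?thesis by simp
qed

lemma Lam_eq: "Lam N \<eta> \<phi> = lamf N \<eta> \<phi>"
  unfolding Lam_def
proof (rule the_equality)
  show "supp_in N (lamf N \<eta> \<phi>) \<and> (\<forall>\<chi>. supp_in N \<chi> \<longrightarrow> finner N (lamf N \<eta> \<phi>) \<chi> = finner N \<phi> (wedge \<eta> \<chi>))"
    using lamf_adj by (auto simp: supp_in_def lamf_def split: if_splits)
next
  fix \<psi> assume H: "supp_in N \<psi> \<and> (\<forall>\<chi>. supp_in N \<chi> \<longrightarrow> finner N \<psi> \<chi> = finner N \<phi> (wedge \<eta> \<chi>))"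
  define d where "d S = \<psi> S - lamf N \<eta> \<phi> S" for S
  have sd: "supp_in N d" using H unfolding d_def supp_in_def lamf_def by auto
  have "finner N d d = finner N \<psi> d - finner N (lamf N \<eta> \<phi>) d"
    unfolding d_def[abs_def] by (rule finner_diff)
  also have "\<dots> = 0" using H sd lamf_adj[OF sd] by simp
  finally have "(\<Sum>S\<in>Pow {..<N}. 2 ^ card S * (cmod (d S))\<^sup>2) = 0"
    using finner_self[of N d] by (metis of_real_eq_0_iff)
  then have z: "\<forall>S\<in>Pow {..<N}. 2 ^ card S * (cmod (d S))\<^sup>2 = 0"
    by (subst (asm) sum_nonneg_eq_0_iff) auto
  show "\<psi> = lamf N \<eta> \<phi>"
  proof
    fix S show "\<psi> S = lamf N \<eta> \<phi> S"
    proof (cases "S \<subseteq> {..<N}")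
      case True then show ?thesis using z unfolding d_def by auto
    next
      case False then show ?thesis using H unfolding supp_in_def lamf_def by auto
    qed
  qed
qed



definition msum :: "'i set \<Rightarrow> ('i \<Rightarrow> nat set) \<Rightarrow> ('i \<Rightarrow> complex) \<Rightarrow> form" where
  "msum I X c = (\<lambda>S. \<Sum>t\<in>I. c t * mono (X t) S)"

lemma msum_at:
  assumes "finite I" "inj_on X I" "t \<in> I"
  shows "msum I X c (X t) = c t"
proof -
  have "msum I X c (X t) = (\<Sum>t'\<in>I. if t' = t then c t' else 0)"
    unfolding msum_def mono_def using assms(2,3) by (intro sum.cong refl) (auto simp: inj_on_eq_iff)
  also have "\<dots> = c t" using assms by simp
  finally show ?thesis .
qed

lemma msum_out:
  assumes "S \<notin> X ` I"
  shows "msum I X c S = 0"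
  unfolding msum_def mono_def using assms by (intro sum.neutral) auto

lemma fnorm_msum:
  assumes "finite I" "inj_on X I" "\<And>t. t \<in> I \<Longrightarrow> X t \<subseteq> {..<N} \<and> card (X t) = m"
  shows "(fnorm N (msum I X c))\<^sup>2 = 2 ^ m * (\<Sum>t\<in>I. (cmod (c t))\<^sup>2)"
proof -
  have "(fnorm N (msum I X c))\<^sup>2 = (\<Sum>S\<in>X ` I. 2 ^ card S * (cmod (msum I X c S))\<^sup>2)"
    unfolding fnorm_sq
    by (rule sum.mono_neutral_right) (use assms in \<open>auto simp: msum_out\<close>)
  also have "\<dots> = (\<Sum>t\<in>I. 2 ^ card (X t) * (cmod (msum I X c (X t)))\<^sup>2)"
    using assms(2) by (simp add: sum.reindex)
  also have "\<dots> = (\<Sum>t\<in>I. 2 ^ m * (cmod (c t))\<^sup>2)"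
    using assms by (intro sum.cong refl) (simp add: msum_at)
  finally show ?thesis by (simp add: sum_distrib_left)
qed

lemma lamf_msum: "lamf N \<eta> (msum I X c) T = (\<Sum>t\<in>I. c t * lamf N \<eta> (mono (X t)) T)"
  unfolding lamf_def msum_def
  by (auto simp: sum_distrib_left sum_distrib_right mult.assoc mult.left_commute intro: sum.swap)

lemma lamf_mono: "lamf N \<eta> (mono U0) T = (if T \<subseteq> U0 \<and> U0 \<subseteq> {..<N} then
     of_nat (2 ^ card U0) / of_nat (2 ^ card T) * cnj (wsign (U0 - T) T * \<eta> (U0 - T)) else 0)"
proof (cases "T \<subseteq> {..<N}")
  case True
  have "lamf N \<eta> (mono U0) T = (\<Sum>U\<in>{U\<in>Pow {..<N}. T \<subseteq> U}. if U = U0 then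
     of_nat (2 ^ card U0) / of_nat (2 ^ card T) * cnj (wsign (U0 - T) T * \<eta> (U0 - T)) else 0)"
    unfolding lamf_def mono_def using True by (simp only: if_True) (rule sum.cong, auto)
  also have "\<dots> = (if T \<subseteq> U0 \<and> U0 \<subseteq> {..<N} then
     of_nat (2 ^ card U0) / of_nat (2 ^ card T) * cnj (wsign (U0 - T) T * \<eta> (U0 - T)) else 0)"
  proof -
    have fin: "finite {U\<in>Pow {..<N}. T \<subseteq> U}" by auto
    show ?thesis using fin by (subst sum.delta) auto
  qed
  finally show ?thesis .
next
  case False then show ?thesis unfolding lamf_def by auto
qed

lemma wedge_msum_left: "wedge (msum I X c) \<psi> = (\<lambda>U. \<Sum>t\<in>I. c t * wedge (mono (X t)) \<psi> U)"
  unfolding msum_def wedge_sum_left wedge_scale_left ..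

lemma wedge_msum_right: "wedge \<phi> (msum I X c) = (\<lambda>U. \<Sum>t\<in>I. c t * wedge \<phi> (mono (X t)) U)"
  unfolding msum_def wedge_sum_right wedge_scale_right ..

lemma sum_le_eq_iff:
  fixes g h :: "'a \<Rightarrow> real"
  assumes "finite I" "\<And>i. i \<in> I \<Longrightarrow> g i \<le> h i"
  shows "sum g I \<le> sum h I" "(sum g I = sum h I) \<longleftrightarrow> (\<forall>i\<in>I. g i = h i)"
proof -
  show "sum g I \<le> sum h I" using assms by (intro sum_mono) auto
  have e: "(\<Sum>i\<in>I. h i - g i) = sum h I - sum g I" by (simp add: sum_subtractf)
  have "(sum g I = sum h I) \<longleftrightarrow> (\<Sum>i\<in>I. h i - g i) = 0" unfolding e by linarith
  also have "\<dots> \<longleftrightarrow> (\<forall>i\<in>I. h i - g i = 0)" using assms by (intro sum_nonneg_eq_0_iff) auto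
  finally show "(sum g I = sum h I) \<longleftrightarrow> (\<forall>i\<in>I. g i = h i)" by force
qed



definition QQ :: "nat \<Rightarrow> nat \<Rightarrow> nat \<Rightarrow> nat \<Rightarrow> nat \<Rightarrow> nat \<Rightarrow> nat set" where
  "QQ n r j k a b = {j, n+r+k, n+a, n+r+n+b}"
definition I4 :: "nat \<Rightarrow> nat \<Rightarrow> (nat \<times> nat \<times> nat \<times> nat) set" where
  "I4 n r = {..<n} \<times> {..<n} \<times> {..<r} \<times> {..<r}"
definition Q4 :: "nat \<Rightarrow> nat \<Rightarrow> nat \<times> nat \<times> nat \<times> nat \<Rightarrow> nat set" where
  "Q4 n r = (\<lambda>(j,k,a,b). QQ n r j k a b)"
definition A4 :: "(nat \<Rightarrow> nat \<Rightarrow> nat \<Rightarrow> nat \<Rightarrow> complex) \<Rightarrow> nat \<times> nat \<times> nat \<times> nat \<Rightarrow> complex" where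
  "A4 A = (\<lambda>(j,k,a,b). A j k a b)"

lemma I4_fin[simp]: "finite (I4 n r)" by (simp add: I4_def)

lemma wsign_empty: assumes e: "{(s, t). s \<in> S \<and> t \<in> T \<and> t < s} = {}" shows "wsign S T = 1"
  unfolding wsign_def e by simp
lemma wsign_one: assumes e: "{(s, t). s \<in> S \<and> t \<in> T \<and> t < s} = {p}" shows "wsign S T = -1"
  unfolding wsign_def e by simp
lemma wsign_three: assumes e: "{(s, t). s \<in> S \<and> t \<in> T \<and> t < s} = {p,q,w}" and "p \<noteq> q" "p \<noteq> w" "q \<noteq> w" shows "wsign S T = -1"
  unfolding wsign_def e using assms(2-4) by simp

lemma mono_eta: "(\<lambda>U. mono S U) = mono S" by simp

lemma wedge_11:
  assumes "x < y"
  shows "wedge (mono {x}) (mono {y}) = mono {x, y}"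
proof -
  have "wsign {x} {y} = 1" using assms by (intro wsign_empty) auto
  then show ?thesis using assms by (subst wedge_mono_mono) (auto simp: insert_commute)
qed

lemma wedge_QQ:
  assumes "j < n" "k < n" "a < r" "b < r"
  shows "wedge (fscale \<i> (wedge (mono {j}) (mono {n+r+k}))) (fscale \<i> (wedge (mono {n+a}) (mono {n+r+n+b})))
     = mono (QQ n r j k a b)"
proof -
  have s: "wsign {j, n+r+k} {n+a, n+r+n+b} = -1"
    using assms by (intro wsign_one[of _ _ "(n+r+k, n+a)"]) auto
  have "wedge (mono {j, n+r+k}) (mono {n+a, n+r+n+b}) = (\<lambda>U. - mono (QQ n r j k a b) U)"
    using assms s by (subst wedge_mono_mono) (auto simp: QQ_def insert_commute)
  moreover have "fscale \<i> (mono S) = (\<lambda>U. \<i> * mono S U)" for S unfolding fscale_def ..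
  ultimately show ?thesis using assms
    by (simp add: wedge_11 wedge_scale_left wedge_scale_right)
qed

lemma sum4_prod: "(\<Sum>t\<in>I4 n r. f t) = (\<Sum>j<n. \<Sum>k<n. \<Sum>a<r. \<Sum>b<r. f (j,k,a,b))"
  unfolding I4_def by (simp add: sum.cartesian_product)

lemma curv_msum: "curv_form n r A = msum (I4 n r) (Q4 n r) (A4 A)"
  unfolding curv_form_def msum_def sum4_prod
  by (intro ext sum.cong refl) (simp add: wedge_QQ Q4_def A4_def)

lemma omega_msum: "omegaV n r = msum {..<n} (\<lambda>l. {l, n+r+l}) (\<lambda>_. \<i>/2)"
  unfolding omegaV_def msum_def by (intro ext sum.cong refl) (simp add: wedge_11)

lemma hE_msum: "hE n r = msum {..<r} (\<lambda>a. {n+a, n+r+n+a}) (\<lambda>_. \<i>/2)"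
  unfolding hE_def msum_def by (intro ext sum.cong refl) (simp add: wedge_11)

lemma QQ_inj:
  assumes "j < n" "k < n" "a < r" "b < r" "j' < n" "k' < n" "a' < r" "b' < r"
    and "QQ n r j k a b = QQ n r j' k' a' b'"
  shows "j = j' \<and> k = k' \<and> a = a' \<and> b = b'"
proof -
  have "j \<in> QQ n r j' k' a' b'" "n+r+k \<in> QQ n r j' k' a' b'" "n+a \<in> QQ n r j' k' a' b'" "n+r+n+b \<in> QQ n r j' k' a' b'"
    using assms(9) by (auto simp: QQ_def)
  then show ?thesis using assms(1-8) by (auto simp: QQ_def)
qed

lemma Q4_inj: "inj_on (Q4 n r) (I4 n r)"
  unfolding inj_on_def I4_def Q4_def using QQ_inj by fastforce

lemma QQ_card: "j < n \<Longrightarrow> k < n \<Longrightarrow> a < r \<Longrightarrow> b < r \<Longrightarrow> card (QQ n r j k a b) = 4"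
  unfolding QQ_def by auto

lemma QQ_sub: "j < n \<Longrightarrow> k < n \<Longrightarrow> a < r \<Longrightarrow> b < r \<Longrightarrow> QQ n r j k a b \<subseteq> {..<dimC n r}"
  unfolding QQ_def dimC_def by auto

lemma fnorm_R: "(fnorm (dimC n r) (curv_form n r A))\<^sup>2 = 16 * (\<Sum>t\<in>I4 n r. (cmod (A4 A t))\<^sup>2)"
proof -
  have "\<And>t. t \<in> I4 n r \<Longrightarrow> Q4 n r t \<subseteq> {..<dimC n r} \<and> card (Q4 n r t) = 4"
    by (clarsimp simp: I4_def Q4_def QQ_card QQ_sub)
  then show ?thesis unfolding curv_msum
    by (subst fnorm_msum[where m=4]) (auto simp: Q4_inj)
qed



definition PI :: "nat \<Rightarrow> (nat \<times> nat) set" where "PI m = {..<m} \<times> {..<m}"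
definition PE2 :: "nat \<Rightarrow> nat \<Rightarrow> nat \<times> nat \<Rightarrow> nat set" where "PE2 n r = (\<lambda>(a,b). {n+a, n+r+n+b})"

lemma PI_fin[simp]: "finite (PI m)" by (simp add: PI_def)
lemma sum_PI: "(\<Sum>t\<in>PI m. f t) = (\<Sum>a<m. \<Sum>b<m. f (a,b))"
  unfolding PI_def by (simp add: sum.cartesian_product)

lemma set_E:
  assumes "j < n" "k < n" "l < n" "a < r" "b < r" "T \<subseteq> QQ n r j k a b"
  shows "(QQ n r j k a b - T = {l, n+r+l}) \<longleftrightarrow> (j = l \<and> k = l \<and> T = {n+a, n+r+n+b})"
proof
  assume H: "QQ n r j k a b - T = {l, n+r+l}"
  have "l \<in> QQ n r j k a b" "n+r+l \<in> QQ n r j k a b" using H by auto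
  then have jl: "j = l" and kl: "k = l" using assms(1-5) by (auto simp: QQ_def)
  have "T = QQ n r j k a b - (QQ n r j k a b - T)" using assms(6) by auto
  also have "\<dots> = {n+a, n+r+n+b}" unfolding H using assms(1-5) jl kl by (auto simp: QQ_def)
  finally show "j = l \<and> k = l \<and> T = {n+a, n+r+n+b}" using jl kl by simp
next
  assume "j = l \<and> k = l \<and> T = {n+a, n+r+n+b}"
  then show "QQ n r j k a b - T = {l, n+r+l}" using assms(1-5) by (auto simp: QQ_def)
qed

lemma lamf_E:
  assumes "j < n" "k < n" "a < r" "b < r"
  shows "lamf (dimC n r) (omegaV n r) (mono (QQ n r j k a b)) T = (if j = k \<and> T = {n+a, n+r+n+b} then 2*\<i> else 0)"
proof (cases "T \<subseteq> QQ n r j k a b")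
  case True
  have om: "omegaV n r (QQ n r j k a b - T) = (if j = k \<and> T = {n+a, n+r+n+b} then \<i>/2 else 0)"
  proof -
    have "omegaV n r (QQ n r j k a b - T) = (\<Sum>l<n. if l = j then (if j = k \<and> T = {n+a, n+r+n+b} then \<i>/2 else 0) else 0)"
      unfolding omega_msum msum_def mono_def
      by (intro sum.cong refl) (use set_E[OF assms(1,2) _ assms(3,4) True] in auto)
    also have "\<dots> = (if j = k \<and> T = {n+a, n+r+n+b} then \<i>/2 else 0)" using assms(1) by simp
    finally show ?thesis .
  qed
  show ?thesis
  proof (cases "j = k \<and> T = {n+a, n+r+n+b}")
    case c: True
    have d: "QQ n r j k a b - T = {j, n+r+j}" using c assms by (auto simp: QQ_def)
    have s: "wsign {j, n+r+j} {n+a, n+r+n+b} = -1"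
      using assms by (intro wsign_one[of _ _ "(n+r+j, n+a)"]) auto
    have cT: "card T = 2" using c assms by auto
    have s': "wsign {j, n+r+j} T = -1" using s c by simp
    have o2: "omegaV n r (QQ n r j k a b - T) = \<i>/2" using om c by simp
    have "lamf (dimC n r) (omegaV n r) (mono (QQ n r j k a b)) T = of_nat (2^4) / of_nat (2^2) * cnj (-1 * (\<i>/2))"
      unfolding lamf_mono o2 using True QQ_sub[OF assms] QQ_card[OF assms] cT d s' by simp
    then show ?thesis using c by simp
  next
    case False
    then have "omegaV n r (QQ n r j k a b - T) = 0" using om by simp
    then have "lamf (dimC n r) (omegaV n r) (mono (QQ n r j k a b)) T = 0" unfolding lamf_mono by simp
    then show ?thesis by (simp only: if_not_P[OF False])
  qed
next
  case False
  then have "\<not> (j = k \<and> T = {n+a, n+r+n+b})" by (auto simp: QQ_def)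
  then show ?thesis using False unfolding lamf_mono by simp
qed

lemma Lam_omega_R:
  "Lam (dimC n r) (omegaV n r) (curv_form n r A) = msum (PI r) (PE2 n r) (\<lambda>(a,b). 2*\<i>*(\<Sum>j<n. A j j a b))"
proof
  fix T
  have "Lam (dimC n r) (omegaV n r) (curv_form n r A) T =
     (\<Sum>j<n. \<Sum>k<n. \<Sum>a<r. \<Sum>b<r. A j k a b * (if j = k \<and> T = {n+a, n+r+n+b} then 2*\<i> else 0))"
    unfolding Lam_eq curv_msum lamf_msum sum4_prod
    by (intro sum.cong refl) (simp add: Q4_def A4_def lamf_E)
  also have "\<dots> = (\<Sum>j<n. \<Sum>a<r. \<Sum>b<r. A j j a b * (if T = {n+a, n+r+n+b} then 2*\<i> else 0))"
  proof (rule sum.cong[OF refl])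
    fix j assume j: "j \<in> {..<n}"
    have "(\<Sum>k<n. \<Sum>a<r. \<Sum>b<r. A j k a b * (if j = k \<and> T = {n+a, n+r+n+b} then 2*\<i> else 0)) =
          (\<Sum>k<n. if k = j then (\<Sum>a<r. \<Sum>b<r. A j j a b * (if T = {n+a, n+r+n+b} then 2*\<i> else 0)) else 0)"
      by (intro sum.cong refl) auto
    also have "\<dots> = (\<Sum>a<r. \<Sum>b<r. A j j a b * (if T = {n+a, n+r+n+b} then 2*\<i> else 0))"
      using j by simp
    finally show "(\<Sum>k<n. \<Sum>a<r. \<Sum>b<r. A j k a b * (if j = k \<and> T = {n+a, n+r+n+b} then 2*\<i> else 0)) =
          (\<Sum>a<r. \<Sum>b<r. A j j a b * (if T = {n+a, n+r+n+b} then 2*\<i> else 0))" .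
  qed
  also have "\<dots> = (\<Sum>a<r. \<Sum>b<r. \<Sum>j<n. A j j a b * (if T = {n+a, n+r+n+b} then 2*\<i> else 0))"
    by (subst sum.swap) (simp add: sum.swap[where A="{..<n}"])
  also have "\<dots> = msum (PI r) (PE2 n r) (\<lambda>(a,b). 2*\<i>*(\<Sum>j<n. A j j a b)) T"
    unfolding msum_def sum_PI
    by (intro sum.cong refl) (simp add: PE2_def mono_def sum_distrib_left sum_distrib_right mult.commute eq_commute)
  finally show "Lam (dimC n r) (omegaV n r) (curv_form n r A) T = msum (PI r) (PE2 n r) (\<lambda>(a,b). 2*\<i>*(\<Sum>j<n. A j j a b)) T" .
qed

lemma PE2_inj: "inj_on (PE2 n r) (PI r)"
  unfolding inj_on_def PI_def PE2_def by (auto simp: doubleton_eq_iff)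

lemma fnorm_LamE:
  "(fnorm (dimC n r) (Lam (dimC n r) (omegaV n r) (curv_form n r A)))\<^sup>2 = 16 * (\<Sum>a<r. \<Sum>b<r. (cmod (\<Sum>j<n. A j j a b))\<^sup>2)"
proof -
  have "\<And>t. t \<in> PI r \<Longrightarrow> PE2 n r t \<subseteq> {..<dimC n r} \<and> card (PE2 n r t) = 2"
    by (auto simp: PI_def PE2_def dimC_def)
  then have "(fnorm (dimC n r) (Lam (dimC n r) (omegaV n r) (curv_form n r A)))\<^sup>2
     = 2^2 * (\<Sum>t\<in>PI r. (cmod ((\<lambda>(a,b). 2*\<i>*(\<Sum>j<n. A j j a b)) t))\<^sup>2)"
    unfolding Lam_omega_R by (intro fnorm_msum) (auto simp: PE2_inj)
  also have "\<dots> = 16 * (\<Sum>a<r. \<Sum>b<r. (cmod (\<Sum>j<n. A j j a b))\<^sup>2)"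
    unfolding sum_PI by (simp add: norm_mult power_mult_distrib sum_distrib_left[symmetric])
  finally show ?thesis .
qed



definition PV2 :: "nat \<Rightarrow> nat \<Rightarrow> nat \<times> nat \<Rightarrow> nat set" where "PV2 n r = (\<lambda>(j,k). {j, n+r+k})"

lemma set_V:
  assumes "j < n" "k < n" "c < r" "a < r" "b < r" "T \<subseteq> QQ n r j k a b"
  shows "(QQ n r j k a b - T = {n+c, n+r+n+c}) \<longleftrightarrow> (a = c \<and> b = c \<and> T = {j, n+r+k})"
proof
  assume H: "QQ n r j k a b - T = {n+c, n+r+n+c}"
  have "n+c \<in> QQ n r j k a b" "n+r+n+c \<in> QQ n r j k a b" using H by auto
  then have ac: "a = c" and bc: "b = c" using assms(1-5) by (auto simp: QQ_def)
  have "T = QQ n r j k a b - (QQ n r j k a b - T)" using assms(6) by auto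
  also have "\<dots> = {j, n+r+k}" unfolding H using assms(1-5) ac bc by (auto simp: QQ_def)
  finally show "a = c \<and> b = c \<and> T = {j, n+r+k}" using ac bc by simp
next
  assume "a = c \<and> b = c \<and> T = {j, n+r+k}"
  then show "QQ n r j k a b - T = {n+c, n+r+n+c}" using assms(1-5) by (auto simp: QQ_def)
qed

lemma lamf_V:
  assumes "j < n" "k < n" "a < r" "b < r"
  shows "lamf (dimC n r) (hE n r) (mono (QQ n r j k a b)) T = (if a = b \<and> T = {j, n+r+k} then 2*\<i> else 0)"
proof (cases "T \<subseteq> QQ n r j k a b")
  case True
  have om: "hE n r (QQ n r j k a b - T) = (if a = b \<and> T = {j, n+r+k} then \<i>/2 else 0)"
  proof -
    have "hE n r (QQ n r j k a b - T) = (\<Sum>c<r. if c = a then (if a = b \<and> T = {j, n+r+k} then \<i>/2 else 0) else 0)"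
      unfolding hE_msum msum_def mono_def
      by (intro sum.cong refl) (use set_V[OF assms(1,2) _ assms(3,4) True] in auto)
    also have "\<dots> = (if a = b \<and> T = {j, n+r+k} then \<i>/2 else 0)" using assms(3) by simp
    finally show ?thesis .
  qed
  show ?thesis
  proof (cases "a = b \<and> T = {j, n+r+k}")
    case c: True
    have d: "QQ n r j k a b - T = {n+a, n+r+n+a}" using c assms by (auto simp: QQ_def)
    have s: "wsign {n+a, n+r+n+a} {j, n+r+k} = -1"
      using assms by (intro wsign_three[of _ _ "(n+a, j)" "(n+r+n+a, j)" "(n+r+n+a, n+r+k)"]) auto
    have cT: "card T = 2" using c assms by auto
    have s': "wsign {n+a, n+r+n+a} T = -1" using s c by simp
    have o2: "hE n r (QQ n r j k a b - T) = \<i>/2" using om c by simp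
    have "lamf (dimC n r) (hE n r) (mono (QQ n r j k a b)) T = of_nat (2^4) / of_nat (2^2) * cnj (-1 * (\<i>/2))"
      unfolding lamf_mono o2 using True QQ_sub[OF assms] QQ_card[OF assms] cT d s' by simp
    then show ?thesis using c by simp
  next
    case False
    then have "hE n r (QQ n r j k a b - T) = 0" using om by simp
    then have "lamf (dimC n r) (hE n r) (mono (QQ n r j k a b)) T = 0" unfolding lamf_mono by simp
    then show ?thesis by (simp only: if_not_P[OF False])
  qed
next
  case False
  then have "\<not> (a = b \<and> T = {j, n+r+k})" by (auto simp: QQ_def)
  then show ?thesis using False unfolding lamf_mono by simp
qed

lemma Lam_h_R:
  "Lam (dimC n r) (hE n r) (curv_form n r A) = msum (PI n) (PV2 n r) (\<lambda>(j,k). 2*\<i>*(\<Sum>a<r. A j k a a))"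
proof
  fix T
  have "Lam (dimC n r) (hE n r) (curv_form n r A) T =
     (\<Sum>j<n. \<Sum>k<n. \<Sum>a<r. \<Sum>b<r. A j k a b * (if a = b \<and> T = {j, n+r+k} then 2*\<i> else 0))"
    unfolding Lam_eq curv_msum lamf_msum sum4_prod
    by (intro sum.cong refl) (simp add: Q4_def A4_def lamf_V)
  also have "\<dots> = (\<Sum>j<n. \<Sum>k<n. \<Sum>a<r. A j k a a * (if T = {j, n+r+k} then 2*\<i> else 0))"
  proof (rule sum.cong[OF refl], rule sum.cong[OF refl], rule sum.cong[OF refl])
    fix j k a assume a: "a \<in> {..<r}"
    have "(\<Sum>b<r. A j k a b * (if a = b \<and> T = {j, n+r+k} then 2*\<i> else 0)) =
          (\<Sum>b<r. if a = b then A j k a a * (if T = {j, n+r+k} then 2*\<i> else 0) else 0)"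
      by (intro sum.cong refl) auto
    also have "\<dots> = A j k a a * (if T = {j, n+r+k} then 2*\<i> else 0)" using a by simp
    finally show "(\<Sum>b<r. A j k a b * (if a = b \<and> T = {j, n+r+k} then 2*\<i> else 0)) =
          A j k a a * (if T = {j, n+r+k} then 2*\<i> else 0)" .
  qed
  also have "\<dots> = msum (PI n) (PV2 n r) (\<lambda>(j,k). 2*\<i>*(\<Sum>a<r. A j k a a)) T"
    unfolding msum_def sum_PI
    by (intro sum.cong refl) (simp add: PV2_def mono_def sum_distrib_left sum_distrib_right mult.commute eq_commute)
  finally show "Lam (dimC n r) (hE n r) (curv_form n r A) T = msum (PI n) (PV2 n r) (\<lambda>(j,k). 2*\<i>*(\<Sum>a<r. A j k a a)) T" .
qed

lemma PV2_inj: "inj_on (PV2 n r) (PI n)"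
  unfolding inj_on_def PI_def PV2_def by (auto simp: doubleton_eq_iff)

lemma fnorm_LamV:
  "(fnorm (dimC n r) (Lam (dimC n r) (hE n r) (curv_form n r A)))\<^sup>2 = 16 * (\<Sum>j<n. \<Sum>k<n. (cmod (\<Sum>a<r. A j k a a))\<^sup>2)"
proof -
  have "\<And>t. t \<in> PI n \<Longrightarrow> PV2 n r t \<subseteq> {..<dimC n r} \<and> card (PV2 n r t) = 2"
    by (auto simp: PI_def PV2_def dimC_def)
  then have "(fnorm (dimC n r) (Lam (dimC n r) (hE n r) (curv_form n r A)))\<^sup>2
     = 2^2 * (\<Sum>t\<in>PI n. (cmod ((\<lambda>(j,k). 2*\<i>*(\<Sum>a<r. A j k a a)) t))\<^sup>2)"
    unfolding Lam_h_R by (intro fnorm_msum) (auto simp: PV2_inj)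
  also have "\<dots> = 16 * (\<Sum>j<n. \<Sum>k<n. (cmod (\<Sum>a<r. A j k a a))\<^sup>2)"
    unfolding sum_PI by (simp add: norm_mult power_mult_distrib sum_distrib_left[symmetric])
  finally show ?thesis .
qed



lemma ofreal_cmod_sq: "(complex_of_real (cmod z))\<^sup>2 = z * cnj z"
  by (metis complex_norm_square of_real_power)

lemma cs_identity:
  fixes x :: "nat \<Rightarrow> complex"
  shows "(\<Sum>j<n. \<Sum>k<n. (cmod (x j - x k))\<^sup>2) = 2 * (real n * (\<Sum>j<n. (cmod (x j))\<^sup>2) - (cmod (\<Sum>j<n. x j))\<^sup>2)"
proof -
  have "(\<Sum>j<n. \<Sum>k<n. (x j - x k) * cnj (x j - x k)) =
        2 * (of_nat n * (\<Sum>j<n. x j * cnj (x j)) - (\<Sum>j<n. x j) * cnj (\<Sum>j<n. x j))"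
  proof -
    have sw: "(\<Sum>j<n. \<Sum>k<n. x j * cnj (x k)) = (\<Sum>j<n. \<Sum>k<n. x k * cnj (x j))" by (rule sum.swap)
    show ?thesis
      by (simp add: algebra_simps sum.distrib sum_subtractf sum_distrib_left sum_distrib_right cnj_sum sw)
  qed
  then have "complex_of_real (\<Sum>j<n. \<Sum>k<n. (cmod (x j - x k))\<^sup>2) =
     complex_of_real (2 * (real n * (\<Sum>j<n. (cmod (x j))\<^sup>2) - (cmod (\<Sum>j<n. x j))\<^sup>2))"
    by (simp add: ofreal_cmod_sq of_real_sum cnj_sum)
  then show ?thesis using of_real_eq_iff by blast
qed

lemma cs_ineq:
  fixes x :: "nat \<Rightarrow> complex"
  shows "(cmod (\<Sum>j<n. x j))\<^sup>2 \<le> real n * (\<Sum>j<n. (cmod (x j))\<^sup>2)"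
    "((cmod (\<Sum>j<n. x j))\<^sup>2 = real n * (\<Sum>j<n. (cmod (x j))\<^sup>2)) \<longleftrightarrow> (\<forall>j<n. \<forall>k<n. x j = x k)"
proof -
  have nn: "0 \<le> (\<Sum>j<n. \<Sum>k<n. (cmod (x j - x k))\<^sup>2)" by (intro sum_nonneg) auto
  then show "(cmod (\<Sum>j<n. x j))\<^sup>2 \<le> real n * (\<Sum>j<n. (cmod (x j))\<^sup>2)"
    unfolding cs_identity by simp
  have "((cmod (\<Sum>j<n. x j))\<^sup>2 = real n * (\<Sum>j<n. (cmod (x j))\<^sup>2)) \<longleftrightarrow>
        (\<Sum>j<n. \<Sum>k<n. (cmod (x j - x k))\<^sup>2) = 0"
    unfolding cs_identity by auto
  also have "\<dots> \<longleftrightarrow> (\<forall>j\<in>{..<n}. (\<Sum>k<n. (cmod (x j - x k))\<^sup>2) = 0)"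
    by (intro sum_nonneg_eq_0_iff) (auto intro: sum_nonneg)
  also have "\<dots> \<longleftrightarrow> (\<forall>j<n. \<forall>k<n. x j = x k)"
    by (auto simp: sum_nonneg_eq_0_iff)
  finally show "((cmod (\<Sum>j<n. x j))\<^sup>2 = real n * (\<Sum>j<n. (cmod (x j))\<^sup>2)) \<longleftrightarrow> (\<forall>j<n. \<forall>k<n. x j = x k)" .
qed

lemma diag_ineq:
  fixes f :: "nat \<Rightarrow> nat \<Rightarrow> real"
  assumes nn: "\<And>j k. 0 \<le> f j k"
  shows "(\<Sum>j<n. f j j) \<le> (\<Sum>j<n. \<Sum>k<n. f j k)"
    "((\<Sum>j<n. f j j) = (\<Sum>j<n. \<Sum>k<n. f j k)) \<longleftrightarrow> (\<forall>j<n. \<forall>k<n. j \<noteq> k \<longrightarrow> f j k = 0)"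
proof -
  have e: "(\<Sum>k<n. f j k) = f j j + (\<Sum>k\<in>{..<n} - {j}. f j k)" if "j < n" for j
    using that by (subst sum.remove[of _ j]) auto
  have le: "f j j \<le> (\<Sum>k<n. f j k)" if "j \<in> {..<n}" for j
    using that e[of j] nn by (auto intro: sum_nonneg)
  show "(\<Sum>j<n. f j j) \<le> (\<Sum>j<n. \<Sum>k<n. f j k)" using le by (intro sum_mono) auto
  have "((\<Sum>j<n. f j j) = (\<Sum>j<n. \<Sum>k<n. f j k)) \<longleftrightarrow> (\<forall>j\<in>{..<n}. f j j = (\<Sum>k<n. f j k))"
  proof -
    have "(\<Sum>j<n. \<Sum>k<n. f j k) - (\<Sum>j<n. f j j) = (\<Sum>j<n. (\<Sum>k<n. f j k) - f j j)" by (simp add: sum_subtractf)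
    moreover have "(\<Sum>j<n. (\<Sum>k<n. f j k) - f j j) = 0 \<longleftrightarrow> (\<forall>j\<in>{..<n}. (\<Sum>k<n. f j k) - f j j = 0)"
      using le by (intro sum_nonneg_eq_0_iff) auto
    moreover have "((\<Sum>j<n. f j j) = (\<Sum>j<n. \<Sum>k<n. f j k)) \<longleftrightarrow> (\<Sum>j<n. \<Sum>k<n. f j k) - (\<Sum>j<n. f j j) = 0"
      by linarith
    moreover have "(\<forall>j\<in>{..<n}. (\<Sum>k<n. f j k) - f j j = 0) \<longleftrightarrow> (\<forall>j\<in>{..<n}. f j j = (\<Sum>k<n. f j k))"
      by (simp add: eq_iff_diff_eq_0[symmetric] eq_commute[of "f _ _"])
    ultimately show ?thesis by argo
  qed
  also have "\<dots> \<longleftrightarrow> (\<forall>j<n. \<forall>k<n. j \<noteq> k \<longrightarrow> f j k = 0)"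
  proof -
    have "f j j = (\<Sum>k<n. f j k) \<longleftrightarrow> (\<forall>k\<in>{..<n} - {j}. f j k = 0)" if "j < n" for j
      using e[OF that] nn by (simp add: sum_nonneg_eq_0_iff)
    then show ?thesis by auto
  qed
  finally show "((\<Sum>j<n. f j j) = (\<Sum>j<n. \<Sum>k<n. f j k)) \<longleftrightarrow> (\<forall>j<n. \<forall>k<n. j \<noteq> k \<longrightarrow> f j k = 0)" .
qed

lemma sq0: "((cmod z)\<^sup>2 = 0) = (z = 0)" by simp

lemma block_ineq:
  fixes B :: "nat \<Rightarrow> nat \<Rightarrow> complex"
  shows "(cmod (\<Sum>j<n. B j j))\<^sup>2 \<le> real n * (\<Sum>j<n. \<Sum>k<n. (cmod (B j k))\<^sup>2)"
    "((cmod (\<Sum>j<n. B j j))\<^sup>2 = real n * (\<Sum>j<n. \<Sum>k<n. (cmod (B j k))\<^sup>2)) \<longleftrightarrow>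
       ((\<forall>j<n. \<forall>k<n. j \<noteq> k \<longrightarrow> B j k = 0) \<and> (\<forall>j<n. \<forall>k<n. B j j = B k k))"
proof -
  note c = cs_ineq[of "\<lambda>j. B j j" n]
  have nn: "\<And>j k. 0 \<le> (cmod (B j k))\<^sup>2" by simp
  note d = diag_ineq[of "\<lambda>j k. (cmod (B j k))\<^sup>2" n, OF nn]
  have d2: "real n * (\<Sum>j<n. (cmod (B j j))\<^sup>2) \<le> real n * (\<Sum>j<n. \<Sum>k<n. (cmod (B j k))\<^sup>2)"
    using d(1) by (intro mult_left_mono) auto
  show "(cmod (\<Sum>j<n. B j j))\<^sup>2 \<le> real n * (\<Sum>j<n. \<Sum>k<n. (cmod (B j k))\<^sup>2)"
    using c(1) d2 by linarith
  show "((cmod (\<Sum>j<n. B j j))\<^sup>2 = real n * (\<Sum>j<n. \<Sum>k<n. (cmod (B j k))\<^sup>2)) \<longleftrightarrow>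
       ((\<forall>j<n. \<forall>k<n. j \<noteq> k \<longrightarrow> B j k = 0) \<and> (\<forall>j<n. \<forall>k<n. B j j = B k k))"
  proof (cases "n = 0")
    case True then show ?thesis by simp
  next
    case False
    have "((cmod (\<Sum>j<n. B j j))\<^sup>2 = real n * (\<Sum>j<n. \<Sum>k<n. (cmod (B j k))\<^sup>2)) \<longleftrightarrow>
      ((cmod (\<Sum>j<n. B j j))\<^sup>2 = real n * (\<Sum>j<n. (cmod (B j j))\<^sup>2) \<and>
       (\<Sum>j<n. (cmod (B j j))\<^sup>2) = (\<Sum>j<n. \<Sum>k<n. (cmod (B j k))\<^sup>2))"
    proof -
      have ch: "a \<le> b \<Longrightarrow> b \<le> c \<Longrightarrow> (a = c) = (a = b \<and> b = c)" for a b c :: real by linarith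
      have m: "(real n * X = real n * Y) = (X = Y)" for X Y using False by simp
      show ?thesis using ch[OF c(1) d2] m by simp
    qed
    moreover have d2': "((\<Sum>j<n. (cmod (B j j))\<^sup>2) = (\<Sum>j<n. \<Sum>k<n. (cmod (B j k))\<^sup>2)) \<longleftrightarrow> (\<forall>j<n. \<forall>k<n. j \<noteq> k \<longrightarrow> B j k = 0)"
      unfolding d(2) sq0 by (rule refl)
    ultimately show ?thesis using c(2) by argo
  qed
qed



lemma msum_eq_iff:
  assumes "finite I" "inj_on X I"
  shows "msum I X f = msum I X g \<longleftrightarrow> (\<forall>t\<in>I. f t = g t)"
proof
  assume "msum I X f = msum I X g"
  then show "\<forall>t\<in>I. f t = g t" using msum_at[OF assms] by metis
next
  assume "\<forall>t\<in>I. f t = g t"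
  then show "msum I X f = msum I X g" unfolding msum_def by (intro ext sum.cong) auto
qed

lemma pullbackE_msum:
  assumes "pullback_E11 n r u"
  shows "u = msum (PI r) (PE2 n r) (\<lambda>t. u (PE2 n r t))"
proof
  fix S
  show "u S = msum (PI r) (PE2 n r) (\<lambda>t. u (PE2 n r t)) S"
  proof (cases "S \<in> PE2 n r ` PI r")
    case True
    then obtain t where "t \<in> PI r" "S = PE2 n r t" by auto
    then show ?thesis using msum_at[OF PI_fin PE2_inj] by simp
  next
    case False
    then have "u S = 0" using assms unfolding pullback_E11_def PE2_def PI_def by force
    then show ?thesis using msum_out[OF False] by simp
  qed
qed

lemma pullbackV_msum:
  assumes "pullback_V11 n r u"
  shows "u = msum (PI n) (PV2 n r) (\<lambda>t. u (PV2 n r t))"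
proof
  fix S
  show "u S = msum (PI n) (PV2 n r) (\<lambda>t. u (PV2 n r t)) S"
  proof (cases "S \<in> PV2 n r ` PI n")
    case True
    then obtain t where "t \<in> PI n" "S = PV2 n r t" by auto
    then show ?thesis using msum_at[OF PI_fin PV2_inj] by simp
  next
    case False
    then have "u S = 0" using assms unfolding pullback_V11_def PV2_def PI_def by force
    then show ?thesis using msum_out[OF False] by simp
  qed
qed

lemma wedge_mono_disj:
  assumes "finite S" "finite T" "S \<inter> T = {}"
  shows "wedge (mono S) (mono T) U = wsign S T * mono (S \<union> T) U"
  using assms by (simp add: wedge_mono_mono)

lemma wedge_PE_omega:
  assumes "a < r" "b < r"
  shows "wedge (mono {n+a, n+r+n+b}) (omegaV n r) = (\<lambda>U. \<Sum>l<n. -(\<i>/2) * mono (QQ n r l l a b) U)"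
proof (rule ext)
  fix U
  have "wedge (mono {n+a, n+r+n+b}) (mono {l, n+r+l}) U = - mono (QQ n r l l a b) U" if "l < n" for l
  proof -
    have s: "wsign {n+a, n+r+n+b} {l, n+r+l} = -1"
      using assms that by (intro wsign_three[of _ _ "(n+a, l)" "(n+r+n+b, l)" "(n+r+n+b, n+r+l)"]) auto
    have u: "{n+a, n+r+n+b} \<union> {l, n+r+l} = QQ n r l l a b" by (auto simp: QQ_def)
    have dj: "{n+a, n+r+n+b} \<inter> {l, n+r+l} = {}" using assms that by auto
    show ?thesis unfolding wedge_mono_disj[OF _ _ dj, simplified] s using u by simp
  qed
  then show "wedge (mono {n+a, n+r+n+b}) (omegaV n r) U = (\<Sum>l<n. -(\<i>/2) * mono (QQ n r l l a b) U)"
    unfolding omega_msum wedge_msum_right by (intro sum.cong refl) simp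
qed

lemma wedge_PV_h:
  assumes "j < n" "k < n"
  shows "wedge (mono {j, n+r+k}) (hE n r) = (\<lambda>U. \<Sum>c<r. -(\<i>/2) * mono (QQ n r j k c c) U)"
proof (rule ext)
  fix U
  have "wedge (mono {j, n+r+k}) (mono {n+c, n+r+n+c}) U = - mono (QQ n r j k c c) U" if "c < r" for c
  proof -
    have s: "wsign {j, n+r+k} {n+c, n+r+n+c} = -1"
      using assms that by (intro wsign_one[of _ _ "(n+r+k, n+c)"]) auto
    have u: "{j, n+r+k} \<union> {n+c, n+r+n+c} = QQ n r j k c c" by (auto simp: QQ_def)
    have dj: "{j, n+r+k} \<inter> {n+c, n+r+n+c} = {}" using assms that by auto
    show ?thesis unfolding wedge_mono_disj[OF _ _ dj, simplified] s using u by simp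
  qed
  then show "wedge (mono {j, n+r+k}) (hE n r) U = (\<Sum>c<r. -(\<i>/2) * mono (QQ n r j k c c) U)"
    unfolding hE_msum wedge_msum_right by (intro sum.cong refl) simp
qed

lemma wedge_msumE:
  "wedge (msum (PI r) (PE2 n r) c) (omegaV n r) = msum (I4 n r) (Q4 n r) (\<lambda>(j,k,a,b). if j = k then -(\<i>/2) * c (a,b) else 0)"
proof (rule ext)
  fix U
  have "wedge (msum (PI r) (PE2 n r) c) (omegaV n r) U = (\<Sum>a<r. \<Sum>b<r. \<Sum>l<n. c (a,b) * (-(\<i>/2) * mono (QQ n r l l a b) U))"
    unfolding wedge_msum_left sum_PI
    by (intro sum.cong refl) (simp add: PE2_def wedge_PE_omega sum_distrib_left)
  also have "\<dots> = (\<Sum>l<n. \<Sum>a<r. \<Sum>b<r. c (a,b) * (-(\<i>/2) * mono (QQ n r l l a b) U))"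
    by (subst sum.swap) (rule sum.cong[OF refl], rule sum.swap)
  also have "\<dots> = msum (I4 n r) (Q4 n r) (\<lambda>(j,k,a,b). if j = k then -(\<i>/2) * c (a,b) else 0) U"
    unfolding msum_def sum4_prod
  proof (rule sum.cong[OF refl])
    fix j assume j: "j \<in> {..<n}"
    have "(\<Sum>k<n. \<Sum>a<r. \<Sum>b<r. (case (j, k, a, b) of (j, k, a, b) \<Rightarrow> if j = k then -(\<i>/2) * c (a, b) else 0) * mono (Q4 n r (j, k, a, b)) U)
       = (\<Sum>k<n. if k = j then (\<Sum>a<r. \<Sum>b<r. c (a,b) * (-(\<i>/2) * mono (QQ n r j j a b) U)) else 0)"
      by (intro sum.cong refl) (auto simp: Q4_def ac_simps)
    also have "\<dots> = (\<Sum>a<r. \<Sum>b<r. c (a,b) * (-(\<i>/2) * mono (QQ n r j j a b) U))" using j by simp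
    finally show "(\<Sum>a<r. \<Sum>b<r. c (a,b) * (-(\<i>/2) * mono (QQ n r j j a b) U)) =
       (\<Sum>k<n. \<Sum>a<r. \<Sum>b<r. (case (j, k, a, b) of (j, k, a, b) \<Rightarrow> if j = k then -(\<i>/2) * c (a, b) else 0) * mono (Q4 n r (j, k, a, b)) U)" by (simp add: ac_simps)
  qed
  finally show "wedge (msum (PI r) (PE2 n r) c) (omegaV n r) U = msum (I4 n r) (Q4 n r) (\<lambda>(j,k,a,b). if j = k then -(\<i>/2) * c (a,b) else 0) U" .
qed

lemma wedge_msumV:
  "wedge (msum (PI n) (PV2 n r) c) (hE n r) = msum (I4 n r) (Q4 n r) (\<lambda>(j,k,a,b). if a = b then -(\<i>/2) * c (j,k) else 0)"
proof (rule ext)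
  fix U
  have "wedge (msum (PI n) (PV2 n r) c) (hE n r) U = (\<Sum>j<n. \<Sum>k<n. \<Sum>a<r. c (j,k) * (-(\<i>/2) * mono (QQ n r j k a a) U))"
    unfolding wedge_msum_left sum_PI
    by (intro sum.cong refl) (simp add: PV2_def wedge_PV_h sum_distrib_left)
  also have "\<dots> = msum (I4 n r) (Q4 n r) (\<lambda>(j,k,a,b). if a = b then -(\<i>/2) * c (j,k) else 0) U"
    unfolding msum_def sum4_prod
  proof (rule sum.cong[OF refl], rule sum.cong[OF refl], rule sum.cong[OF refl])
    fix j k a assume a: "a \<in> {..<r}"
    have "(\<Sum>b<r. (case (j, k, a, b) of (j, k, a, b) \<Rightarrow> if a = b then -(\<i>/2) * c (j, k) else 0) * mono (Q4 n r (j, k, a, b)) U)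
       = (\<Sum>b<r. if b = a then c (j,k) * (-(\<i>/2) * mono (QQ n r j k a a) U) else 0)"
      by (intro sum.cong refl) (auto simp: Q4_def)
    also have "\<dots> = c (j,k) * (-(\<i>/2) * mono (QQ n r j k a a) U)" using a by simp
    finally show "c (j,k) * (-(\<i>/2) * mono (QQ n r j k a a) U) =
       (\<Sum>b<r. (case (j, k, a, b) of (j, k, a, b) \<Rightarrow> if a = b then -(\<i>/2) * c (j, k) else 0) * mono (Q4 n r (j, k, a, b)) U)" by simp
  qed
  finally show "wedge (msum (PI n) (PV2 n r) c) (hE n r) U = msum (I4 n r) (Q4 n r) (\<lambda>(j,k,a,b). if a = b then -(\<i>/2) * c (j,k) else 0) U" .
qed



lemma existsE:
  "(\<exists>u. pullback_E11 n r u \<and> curv_form n r A = wedge u (omegaV n r)) \<longleftrightarrow>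
   (\<forall>j<n. \<forall>k<n. \<forall>a<r. \<forall>b<r. (j \<noteq> k \<longrightarrow> A j k a b = 0) \<and> A j j a b = A k k a b)"
proof
  assume "\<exists>u. pullback_E11 n r u \<and> curv_form n r A = wedge u (omegaV n r)"
  then obtain u where pu: "pullback_E11 n r u" and eq: "curv_form n r A = wedge u (omegaV n r)" by blast
  have "msum (I4 n r) (Q4 n r) (A4 A) = msum (I4 n r) (Q4 n r) (\<lambda>(j,k,a,b). if j = k then -(\<i>/2) * u (PE2 n r (a,b)) else 0)"
    using eq unfolding curv_msum
    by (subst (asm) pullbackE_msum[OF pu]) (simp add: wedge_msumE)
  then have H: "\<forall>t\<in>I4 n r. A4 A t = (\<lambda>(j,k,a,b). if j = k then -(\<i>/2) * u (PE2 n r (a,b)) else 0) t"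
    using msum_eq_iff[OF I4_fin Q4_inj] by blast
  have "A j k a b = (if j = k then -(\<i>/2) * u (PE2 n r (a,b)) else 0)" if "j < n" "k < n" "a < r" "b < r" for j k a b
    using H[rule_format, of "(j,k,a,b)"] that by (simp add: I4_def A4_def)
  then show "\<forall>j<n. \<forall>k<n. \<forall>a<r. \<forall>b<r. (j \<noteq> k \<longrightarrow> A j k a b = 0) \<and> A j j a b = A k k a b"
    by simp
next
  assume C: "\<forall>j<n. \<forall>k<n. \<forall>a<r. \<forall>b<r. (j \<noteq> k \<longrightarrow> A j k a b = 0) \<and> A j j a b = A k k a b"
  define c where "c = (\<lambda>(a,b). 2*\<i>*A 0 0 a b)"
  define u where "u = msum (PI r) (PE2 n r) c"
  have pu: "pullback_E11 n r u"
    unfolding pullback_E11_def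
  proof (intro allI impI)
    fix S assume "u S \<noteq> 0"
    then have "S \<in> PE2 n r ` PI r" using msum_out unfolding u_def by metis
    then show "\<exists>a<r. \<exists>b<r. S = {n+a, n+r+n+b}" by (auto simp: PI_def PE2_def)
  qed
  have "curv_form n r A = wedge u (omegaV n r)"
    unfolding curv_msum u_def wedge_msumE msum_eq_iff[OF I4_fin Q4_inj]
  proof
    fix t assume t: "t \<in> I4 n r"
    then obtain j k a b where tt: "t = (j,k,a,b)" "j < n" "k < n" "a < r" "b < r" by (auto simp: I4_def)
    show "A4 A t = (case t of (j, k, a, b) \<Rightarrow> if j = k then - (\<i> / 2) * c (a, b) else 0)"
    proof (cases "j = k")
      case True
      have "A j j a b = A 0 0 a b" using C tt by (metis gr_zeroI not_less_zero)
      then show ?thesis using tt True by (simp add: A4_def c_def)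
    next
      case False then show ?thesis using tt C by (simp add: A4_def)
    qed
  qed
  then show "\<exists>u. pullback_E11 n r u \<and> curv_form n r A = wedge u (omegaV n r)" using pu by blast
qed

lemma existsV:
  "(\<exists>v. pullback_V11 n r v \<and> curv_form n r A = wedge v (hE n r)) \<longleftrightarrow>
   (\<forall>j<n. \<forall>k<n. \<forall>a<r. \<forall>b<r. (a \<noteq> b \<longrightarrow> A j k a b = 0) \<and> A j k a a = A j k b b)"
proof
  assume "\<exists>u. pullback_V11 n r u \<and> curv_form n r A = wedge u (hE n r)"
  then obtain u where pu: "pullback_V11 n r u" and eq: "curv_form n r A = wedge u (hE n r)" by blast
  have "msum (I4 n r) (Q4 n r) (A4 A) = msum (I4 n r) (Q4 n r) (\<lambda>(j,k,a,b). if a = b then -(\<i>/2) * u (PV2 n r (j,k)) else 0)"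
    using eq unfolding curv_msum
    by (subst (asm) pullbackV_msum[OF pu]) (simp add: wedge_msumV)
  then have H: "\<forall>t\<in>I4 n r. A4 A t = (\<lambda>(j,k,a,b). if a = b then -(\<i>/2) * u (PV2 n r (j,k)) else 0) t"
    using msum_eq_iff[OF I4_fin Q4_inj] by blast
  have "A j k a b = (if a = b then -(\<i>/2) * u (PV2 n r (j,k)) else 0)" if "j < n" "k < n" "a < r" "b < r" for j k a b
    using H[rule_format, of "(j,k,a,b)"] that by (simp add: I4_def A4_def)
  then show "\<forall>j<n. \<forall>k<n. \<forall>a<r. \<forall>b<r. (a \<noteq> b \<longrightarrow> A j k a b = 0) \<and> A j k a a = A j k b b"
    by simp
next
  assume C: "\<forall>j<n. \<forall>k<n. \<forall>a<r. \<forall>b<r. (a \<noteq> b \<longrightarrow> A j k a b = 0) \<and> A j k a a = A j k b b"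
  define c where "c = (\<lambda>(j,k). 2*\<i>*A j k 0 0)"
  define u where "u = msum (PI n) (PV2 n r) c"
  have pu: "pullback_V11 n r u"
    unfolding pullback_V11_def
  proof (intro allI impI)
    fix S assume "u S \<noteq> 0"
    then have "S \<in> PV2 n r ` PI n" using msum_out unfolding u_def by metis
    then show "\<exists>j<n. \<exists>k<n. S = {j, n+r+k}" by (auto simp: PI_def PV2_def)
  qed
  have "curv_form n r A = wedge u (hE n r)"
    unfolding curv_msum u_def wedge_msumV msum_eq_iff[OF I4_fin Q4_inj]
  proof
    fix t assume t: "t \<in> I4 n r"
    then obtain j k a b where tt: "t = (j,k,a,b)" "j < n" "k < n" "a < r" "b < r" by (auto simp: I4_def)
    show "A4 A t = (case t of (j, k, a, b) \<Rightarrow> if a = b then - (\<i> / 2) * c (j, k) else 0)"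
    proof (cases "a = b")
      case True
      have "A j k a a = A j k 0 0" using C tt by (metis gr_zeroI not_less_zero)
      then show ?thesis using tt True by (simp add: A4_def c_def)
    next
      case False then show ?thesis using tt C by (simp add: A4_def)
    qed
  qed
  then show "\<exists>u. pullback_V11 n r u \<and> curv_form n r A = wedge u (hE n r)" using pu by blast
qed

lemma sum4_swap: "(\<Sum>j<n. \<Sum>k<n. \<Sum>a<r. \<Sum>b<r. f j k a b) = (\<Sum>a<r. \<Sum>b<r. \<Sum>j<n. \<Sum>k<(n::nat). f j k a b)"
proof -
  have "(\<Sum>j<n. \<Sum>k<n. \<Sum>a<r. \<Sum>b<r. f j k a b) = (\<Sum>j<n. \<Sum>a<r. \<Sum>k<n. \<Sum>b<r. f j k a b)"
    by (rule sum.cong[OF refl], rule sum.swap)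
  also have "\<dots> = (\<Sum>j<n. \<Sum>a<r. \<Sum>b<r. \<Sum>k<n. f j k a b)"
    by (rule sum.cong[OF refl], rule sum.cong[OF refl], rule sum.swap)
  also have "\<dots> = (\<Sum>a<r. \<Sum>j<n. \<Sum>b<r. \<Sum>k<n. f j k a b)"
    by (rule sum.swap)
  also have "\<dots> = (\<Sum>a<r. \<Sum>b<r. \<Sum>j<n. \<Sum>k<n. f j k a b)"
    by (rule sum.cong[OF refl], rule sum.swap)
  finally show ?thesis .
qed

lemma nested_le_eq:
  fixes G H :: "nat \<Rightarrow> nat \<Rightarrow> real"
  assumes "\<And>a b. G a b \<le> H a b"
  shows "(\<Sum>a<m. \<Sum>b<m. G a b) \<le> (\<Sum>a<m. \<Sum>b<m. H a b)"
    "((\<Sum>a<m. \<Sum>b<m. G a b) = (\<Sum>a<m. \<Sum>b<m. H a b)) \<longleftrightarrow> (\<forall>a<m. \<forall>b<m. G a b = H a b)"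
proof -
  have i: "(\<Sum>b<m. G a b) \<le> (\<Sum>b<m. H a b)" for a by (rule sum_mono) (rule assms)
  show "(\<Sum>a<m. \<Sum>b<m. G a b) \<le> (\<Sum>a<m. \<Sum>b<m. H a b)" by (rule sum_mono) (rule i)
  have "((\<Sum>a<m. \<Sum>b<m. G a b) = (\<Sum>a<m. \<Sum>b<m. H a b)) \<longleftrightarrow> (\<forall>a\<in>{..<m}. (\<Sum>b<m. G a b) = (\<Sum>b<m. H a b))"
    using sum_le_eq_iff(2)[of "{..<m}" "\<lambda>a. \<Sum>b<m. G a b" "\<lambda>a. \<Sum>b<m. H a b"] i by simp
  also have "\<dots> \<longleftrightarrow> (\<forall>a<m. \<forall>b<m. G a b = H a b)"
  proof -
    have "((\<Sum>b<m. G a b) = (\<Sum>b<m. H a b)) \<longleftrightarrow> (\<forall>b\<in>{..<m}. G a b = H a b)" for a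
      using sum_le_eq_iff(2)[of "{..<m}" "G a" "H a"] assms by blast
    then show ?thesis by auto
  qed
  finally show "((\<Sum>a<m. \<Sum>b<m. G a b) = (\<Sum>a<m. \<Sum>b<m. H a b)) \<longleftrightarrow> (\<forall>a<m. \<forall>b<m. G a b = H a b)" .
qed

theorem proposition2p2:
  fixes n r :: nat and A :: "nat \<Rightarrow> nat \<Rightarrow> nat \<Rightarrow> nat \<Rightarrow> complex"
  assumes "herm_coeffs n r A"
  defines "R \<equiv> curv_form n r A"
  defines "c1 \<equiv> Lam (dimC n r) (hE n r) (curv_form n r A)"
  shows "(fnorm (dimC n r) (Lam (dimC n r) (omegaV n r) R))\<^sup>2 \<le> real n * (fnorm (dimC n r) R)\<^sup>2
       \<and> (fnorm (dimC n r) c1)\<^sup>2 = (fnorm (dimC n r) (Lam (dimC n r) (hE n r) R))\<^sup>2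
       \<and> (fnorm (dimC n r) (Lam (dimC n r) (hE n r) R))\<^sup>2 \<le> real r * (fnorm (dimC n r) R)\<^sup>2
       \<and> ((fnorm (dimC n r) (Lam (dimC n r) (omegaV n r) R))\<^sup>2 = real n * (fnorm (dimC n r) R)\<^sup>2
           \<longleftrightarrow> (\<exists>u. pullback_E11 n r u \<and> R = wedge u (omegaV n r)))
       \<and> ((fnorm (dimC n r) (Lam (dimC n r) (hE n r) R))\<^sup>2 = real r * (fnorm (dimC n r) R)\<^sup>2
           \<longleftrightarrow> (\<exists>v. pullback_V11 n r v \<and> R = wedge v (hE n r)))"
proof -
  define G where "G a b = (cmod (\<Sum>j<n. A j j a b))\<^sup>2" for a b
  define H where "H a b = real n * (\<Sum>j<n. \<Sum>k<n. (cmod (A j k a b))\<^sup>2)" for a b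
  define G' where "G' j k = (cmod (\<Sum>a<r. A j k a a))\<^sup>2" for j k
  define H' where "H' j k = real r * (\<Sum>a<r. \<Sum>b<r. (cmod (A j k a b))\<^sup>2)" for j k
  have GH: "\<And>a b. G a b \<le> H a b" unfolding G_def H_def by (rule block_ineq(1))
  have GH': "\<And>j k. G' j k \<le> H' j k" unfolding G'_def H'_def by (rule block_ineq(1))
  have nR: "(fnorm (dimC n r) R)\<^sup>2 = 16 * (\<Sum>a<r. \<Sum>b<r. \<Sum>j<n. \<Sum>k<n. (cmod (A j k a b))\<^sup>2)"
    unfolding R_def fnorm_R sum4_prod by (subst sum4_swap) (simp add: A4_def)
  have nR': "(fnorm (dimC n r) R)\<^sup>2 = 16 * (\<Sum>j<n. \<Sum>k<n. \<Sum>a<r. \<Sum>b<r. (cmod (A j k a b))\<^sup>2)"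
    unfolding R_def fnorm_R sum4_prod by (simp add: A4_def)
  have e1: "(fnorm (dimC n r) (Lam (dimC n r) (omegaV n r) R))\<^sup>2 = 16 * (\<Sum>a<r. \<Sum>b<r. G a b)"
    unfolding R_def fnorm_LamE G_def ..
  have e2: "real n * (fnorm (dimC n r) R)\<^sup>2 = 16 * (\<Sum>a<r. \<Sum>b<r. H a b)"
    unfolding nR H_def by (simp add: sum_distrib_left mult.left_commute)
  have e3: "(fnorm (dimC n r) (Lam (dimC n r) (hE n r) R))\<^sup>2 = 16 * (\<Sum>j<n. \<Sum>k<n. G' j k)"
    unfolding R_def fnorm_LamV G'_def ..
  have e4: "real r * (fnorm (dimC n r) R)\<^sup>2 = 16 * (\<Sum>j<n. \<Sum>k<n. H' j k)"
    unfolding nR' H'_def by (simp add: sum_distrib_left mult.left_commute)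
  note s1 = nested_le_eq[of G H r, OF GH]
  note s2 = nested_le_eq[of G' H' n, OF GH']
  have eqE: "(\<forall>a<r. \<forall>b<r. G a b = H a b) \<longleftrightarrow>
     (\<forall>j<n. \<forall>k<n. \<forall>a<r. \<forall>b<r. (j \<noteq> k \<longrightarrow> A j k a b = 0) \<and> A j j a b = A k k a b)"
  proof -
    have "G a b = H a b \<longleftrightarrow> ((\<forall>j<n. \<forall>k<n. j \<noteq> k \<longrightarrow> A j k a b = 0) \<and> (\<forall>j<n. \<forall>k<n. A j j a b = A k k a b))" for a b
      unfolding G_def H_def by (rule block_ineq(2)[of "\<lambda>j k. A j k a b" n])
    then show ?thesis by blast
  qed
  have eqV: "(\<forall>j<n. \<forall>k<n. G' j k = H' j k) \<longleftrightarrow>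
     (\<forall>j<n. \<forall>k<n. \<forall>a<r. \<forall>b<r. (a \<noteq> b \<longrightarrow> A j k a b = 0) \<and> A j k a a = A j k b b)"
  proof -
    have "G' j k = H' j k \<longleftrightarrow> ((\<forall>a<r. \<forall>b<r. a \<noteq> b \<longrightarrow> A j k a b = 0) \<and> (\<forall>a<r. \<forall>b<r. A j k a a = A j k b b))" for j k
      unfolding G'_def H'_def by (rule block_ineq(2)[of "\<lambda>a b. A j k a b" r])
    then show ?thesis by blast
  qed
  have i1: "(fnorm (dimC n r) (Lam (dimC n r) (omegaV n r) R))\<^sup>2 \<le> real n * (fnorm (dimC n r) R)\<^sup>2"
    unfolding e1 e2 using s1(1) by simp
  have i2: "(fnorm (dimC n r) c1)\<^sup>2 = (fnorm (dimC n r) (Lam (dimC n r) (hE n r) R))\<^sup>2"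
    unfolding c1_def R_def ..
  have i3: "(fnorm (dimC n r) (Lam (dimC n r) (hE n r) R))\<^sup>2 \<le> real r * (fnorm (dimC n r) R)\<^sup>2"
    unfolding e3 e4 using s2(1) by simp
  have i4: "((fnorm (dimC n r) (Lam (dimC n r) (omegaV n r) R))\<^sup>2 = real n * (fnorm (dimC n r) R)\<^sup>2)
           \<longleftrightarrow> (\<exists>u. pullback_E11 n r u \<and> R = wedge u (omegaV n r))"
  proof -
    have "((fnorm (dimC n r) (Lam (dimC n r) (omegaV n r) R))\<^sup>2 = real n * (fnorm (dimC n r) R)\<^sup>2)
       \<longleftrightarrow> ((\<Sum>a<r. \<Sum>b<r. G a b) = (\<Sum>a<r. \<Sum>b<r. H a b))" unfolding e1 e2 by simp
    also have "\<dots> \<longleftrightarrow> (\<exists>u. pullback_E11 n r u \<and> R = wedge u (omegaV n r))"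
      unfolding s1(2) eqE R_def existsE ..
    finally show ?thesis .
  qed
  have i5: "((fnorm (dimC n r) (Lam (dimC n r) (hE n r) R))\<^sup>2 = real r * (fnorm (dimC n r) R)\<^sup>2)
           \<longleftrightarrow> (\<exists>v. pullback_V11 n r v \<and> R = wedge v (hE n r))"
  proof -
    have "((fnorm (dimC n r) (Lam (dimC n r) (hE n r) R))\<^sup>2 = real r * (fnorm (dimC n r) R)\<^sup>2)
       \<longleftrightarrow> ((\<Sum>j<n. \<Sum>k<n. G' j k) = (\<Sum>j<n. \<Sum>k<n. H' j k))" unfolding e3 e4 by simp
    also have "\<dots> \<longleftrightarrow> (\<exists>v. pullback_V11 n r v \<and> R = wedge v (hE n r))"
      unfolding s2(2) eqV R_def existsV ..
    finally show ?thesis .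
  qed
  show ?thesis using i1 i2 i3 i4 i5 by (intro conjI)
qed


end
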